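(* Consider stochastic ORBCD as described in the context with $\eta_t = \sqrt{t} + L$, where $L=\max_jL_j$, with $i_t$ and $j_t$ sampled independently and uniformly from $\{1,\dots,I\}$ and $\{1,\dots,J\}$ respectively, and let $\bar{\mathbf{x}}^T = \frac{1}{T}\sum_{t=1}^T \mathbf{x}^t$. Suppose the block-wise Lipschitz assumption and the boundedness assumption hold. Then for every $\mathbf{x}\in\mathbb{R}^n$, \[ \mathbb{E}_{\xi}[f(\bar{\mathbf{x}}^T) + g(\bar{\mathbf{x}}^T)] - [f(\mathbf{x}) + g(\mathbf{x})] \le \frac{J\big( \frac{\sqrt{T} + L}{2}D^2 + \sqrt{T}R_f^2 + g(\mathbf{x}^1) - g(\mathbf{x}^* )\big)}{T}. \]
   Context: Problem: minimize $f(\mathbf{x})+g(\mathbf{x})$ with $f=\frac1I\sum_{i=1}^I f_i$, each $f_i:\mathbb{R}^n\to\mathbb{R}$ convex and differentiable, and $g(\mathbf{x})=\sum_{j=1}^J g_j(\mathbf{x}_j)$ with each $g_j$ convex; the minimum is attained at $\mathbf{x}^*$. Here $\mathbf{x}$ is partitioned into $J$ non-overlapping blocks $\mathbf{x}_j\in\mathbb{R}^{n_j}$, $U_j\in\mathbb{R}^{n\times n_j}$ are the corresponding columns of an $n\times n$ permutation matrix, $\mathbf{x}=\sum_jU_j\mathbf{x}_j$, $\mathbf{x}_j=U_j^T\mathbf{x}$, $\nabla_j f=U_j^T\nabla f$. ORBCD (stochastic): $\mathbf{x}^1=\mathbf{0}$; at iteration $t$, pick $i_t$ and $j_t$, set $\mathbf{x}_{j_t}^{t+1}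 = \arg\min_{\mathbf{x}_{j_t}} \langle \nabla_{j_t} f_{i_t}(\mathbf{x}^t), \mathbf{x}_{j_t}\rangle + g_{j_t}(\mathbf{x}_{j_t}) + \frac{\eta_t}{2}\|\mathbf{x}_{j_t}-\mathbf{x}^t_{j_t}\|_2^2$ and $\mathbf{x}^{t+1} = \mathbf{x}^t + U_{j_t}(\mathbf{x}^{t+1}_{j_t}-\mathbf{x}^t_{j_t})$. $\xi=\{(i_1,j_1),\dots,(i_{t-1},j_{t-1})\}$ denotes the history of random choices. Block-wise Lipschitz assumption: $\|\nabla_j f_i(\mathbf{x}+U_jh_j)-\nabla_j f_i(\mathbf{x})\|_2\le L_j\|h_j\|_2\le L\|h_j\|_2$ for all $i,j,\mathbf{x},h_j$, $L=\max_jL_j$. Boundedness assumption: $\|\nabla f_i(\mathbf{x}^t)\|_2\le R_f$ for all $i,t$, and all iterates lie in a set $\mathcal{X}$ of diameter $D$. *)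

theory Defs
  imports "HOL-Analysis.Analysis" "HOL-Probability.Probability"
begin

text \<open>Coordinates of R^n are indexed by a finite type 'n. Block j is the index set blk j.
  The block component of a vector, embedded back into R^n (i.e. U_j U_j^T v).\<close>
definition blk_proj :: "'n set \<Rightarrow> real^'n \<Rightarrow> real^'n" where
  "blk_proj B v = (\<chi> k. if k \<in> B then v $ k else 0)"

text \<open>One ORBCD update with step parameter eta, current iterate x and choice (i,j):
  minimize over the block j (all other coordinates kept equal to those of x)
  <grad_j f_i(x), y_j> + g_j(y_j) + eta/2 * ||y_j - x_j||^2.
  Here g j :: real^'n => real is assumed (in the theorem) to depend only on block j.\<close>
definition orbcd_step ::
  "(nat \<Rightarrow> real^'n \<Rightarrow> real^'n) \<Rightarrow> (nat \<Rightarrow> real^'n \<Rightarrow> real) \<Rightarrow> (nat \<Rightarrow> 'n set)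
    \<Rightarrow> real \<Rightarrow> real^'n \<Rightarrow> nat \<times> nat \<Rightarrow> real^'n" where
  "orbcd_step gf g blk eta x ij = (case ij of (i, j) \<Rightarrow>
     arg_min (\<lambda>y. blk_proj (blk j) (gf i x) \<bullet> y + g j y + eta / 2 * (norm (y - x))\<^sup>2)
             (\<lambda>y. \<forall>k. k \<notin> blk j \<longrightarrow> y $ k = x $ k))"

text \<open>orbcd_iter ... h k is the iterate x^(k+1); h k is the choice (i_(k+1), j_(k+1));
  the step size at iteration t = k+1 is eta_t = sqrt t + L.\<close>
primrec orbcd_iter ::
  "(nat \<Rightarrow> real^'n \<Rightarrow> real^'n) \<Rightarrow> (nat \<Rightarrow> real^'n \<Rightarrow> real) \<Rightarrow> (nat \<Rightarrow> 'n set) \<Rightarrow> real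
    \<Rightarrow> (nat \<Rightarrow> nat \<times> nat) \<Rightarrow> nat \<Rightarrow> real^'n" where
  "orbcd_iter gf g blk L h 0 = 0"
| "orbcd_iter gf g blk L h (Suc k) =
     orbcd_step gf g blk (sqrt (real (Suc k)) + L) (orbcd_iter gf g blk L h k) (h k)"

end

theory Submission
  imports Defs
begin


lemma exp_finite:
  assumes "finite (set_pmf M)"
  shows "measure_pmf.expectation M (f::_\<Rightarrow>real) = (\<Sum>a\<in>set_pmf M. pmf M a * f a)"
  using assms by (subst integral_measure_pmf[of "set_pmf M"]) auto

lemma exp_pair:
  assumes "finite (set_pmf p)" "finite (set_pmf q)"
  shows "measure_pmf.expectation (pair_pmf p q) (R::_\<Rightarrow>real)
     = measure_pmf.expectation q (\<lambda>b. measure_pmf.expectation p (\<lambda>a. R (a,b)))"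
proof -
  have "measure_pmf.expectation (pair_pmf p q) R
      = (\<Sum>x\<in>set_pmf p \<times> set_pmf q. pmf (pair_pmf p q) x * R x)"
    using assms by (subst exp_finite) auto
  also have "\<dots> = (\<Sum>a\<in>set_pmf p. \<Sum>b\<in>set_pmf q. pmf p a * pmf q b * R (a,b))"
    unfolding sum.cartesian_product by (rule sum.cong) (auto simp: pmf_pair)
  also have "\<dots> = (\<Sum>b\<in>set_pmf q. \<Sum>a\<in>set_pmf p. pmf q b * (pmf p a * R (a,b)))"
    by (subst sum.swap) (simp add: algebra_simps)
  also have "\<dots> = (\<Sum>b\<in>set_pmf q. pmf q b * (\<Sum>a\<in>set_pmf p. pmf p a * R (a,b)))"
    by (simp add: sum_distrib_left)
  also have "\<dots> = measure_pmf.expectation q (\<lambda>b. measure_pmf.expectation p (\<lambda>a. R (a,b)))"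
    using assms by (simp add: exp_finite)
  finally show ?thesis .
qed

lemma finite_set_Pi_pmf:
  assumes "finite A" "\<And>x. x \<in> A \<Longrightarrow> finite (set_pmf (p x))"
  shows "finite (set_pmf (Pi_pmf A d p))"
  using assms by (subst set_Pi_pmf) (auto intro!: finite_PiE_dflt)

lemma resample:
  assumes A: "finite A" "t \<in> A" and fin: "\<And>x. x \<in> A \<Longrightarrow> finite (set_pmf (p x))"
  shows "measure_pmf.expectation (Pi_pmf A d p) (Q::_\<Rightarrow>real)
       = measure_pmf.expectation (Pi_pmf A d p) (\<lambda>h. measure_pmf.expectation (p t) (\<lambda>y. Q (h(t:=y))))"
proof -
  define B where "B = A - {t}"
  have AB: "A = insert t B" "t \<notin> B" "finite B" using A by (auto simp: B_def)
  have e: "Pi_pmf A d p = map_pmf (\<lambda>(y,f). f(t:=y)) (pair_pmf (p t) (Pi_pmf B d p))"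
    using AB by (simp add: Pi_pmf_insert)
  have f1: "finite (set_pmf (p t))" using fin A by auto
  have f2: "finite (set_pmf (Pi_pmf B d p))"
    using AB fin by (intro finite_set_Pi_pmf) auto
  have "measure_pmf.expectation (Pi_pmf A d p) Q
      = measure_pmf.expectation (pair_pmf (p t) (Pi_pmf B d p)) (\<lambda>x. Q ((snd x)(t:= fst x)))"
    unfolding e by (simp add: case_prod_beta)
  also have "\<dots> = measure_pmf.expectation (Pi_pmf B d p) (\<lambda>f. measure_pmf.expectation (p t) (\<lambda>y. Q (f(t:=y))))"
    using f1 f2 by (subst exp_pair) auto
  also have "\<dots> = measure_pmf.expectation (pair_pmf (p t) (Pi_pmf B d p))
       (\<lambda>x. (\<lambda>f. measure_pmf.expectation (p t) (\<lambda>y. Q (f(t:=y)))) (snd x))"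
    by (rule expectation_pair_pmf_snd[symmetric])
  also have "\<dots> = measure_pmf.expectation (Pi_pmf A d p) (\<lambda>h. measure_pmf.expectation (p t) (\<lambda>y. Q (h(t:=y))))"
    unfolding e by (simp add: case_prod_beta fun_upd_upd)
  finally show ?thesis .
qed

lemma tangent:
  fixes F :: "real^'n \<Rightarrow> real"
  assumes cv: "convex_on UNIV F" and d: "(F has_derivative (\<lambda>h. G \<bullet> h)) (at z)"
  shows "F z + G \<bullet> (x - z) \<le> F x"
proof -
  define \<phi> where "\<phi> = (\<lambda>s::real. F (z + s *\<^sub>R (x - z)))"
  have cphi: "convex_on UNIV \<phi>"
    unfolding \<phi>_def
  proof (rule convex_onI[OF _ convex_UNIV])
    fix t a b :: real assume t: "0 < t" "t < 1"
    have "z + ((1 - t) *\<^sub>R a + t *\<^sub>R b) *\<^sub>R (x - z) = (1 - t) *\<^sub>R (z + a *\<^sub>R (x - z)) + t *\<^sub>R (z + b *\<^sub>R (x - z))"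
      by (simp add: algebra_simps)
    then show "F (z + ((1 - t) *\<^sub>R a + t *\<^sub>R b) *\<^sub>R (x - z)) \<le> (1 - t) * F (z + a *\<^sub>R (x - z)) + t * F (z + b *\<^sub>R (x - z))"
      using convex_onD[OF cv, of t] t by auto
  qed
  have lin: "((\<lambda>s::real. z + s *\<^sub>R (x - z)) has_derivative (\<lambda>s. s *\<^sub>R (x - z))) (at 0)"
    by (auto intro!: derivative_eq_intros)
  have d0: "(F has_derivative (\<lambda>h. G \<bullet> h)) (at (z + 0 *\<^sub>R (x - z)))" using d by simp
  have "(\<phi> has_derivative (\<lambda>s. G \<bullet> (s *\<^sub>R (x - z)))) (at 0)"
    unfolding \<phi>_def using has_derivative_compose[OF lin d0] by (simp add: o_def)
  moreover have "(\<lambda>s. G \<bullet> (s *\<^sub>R (x - z))) = (*) (G \<bullet> (x - z))"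
    by (auto simp: fun_eq_iff)
  ultimately have "(\<phi> has_field_derivative (G \<bullet> (x - z))) (at 0 within UNIV)"
    by (simp add: has_field_derivative_def)
  from convex_on_imp_above_tangent[OF cphi _ _ _ this, of 1]
  have "\<phi> 1 - \<phi> 0 \<ge> G \<bullet> (x - z) * (1 - 0)" by simp
  then show ?thesis by (simp add: \<phi>_def)
qed




lemma nsq: "(norm (u + v::real^'n))\<^sup>2 = (norm u)\<^sup>2 + 2*(u \<bullet> v) + (norm v)\<^sup>2"
  by (simp add: power2_norm_eq_inner inner_add_left inner_add_right inner_commute)

lemma nsq2: "(norm (u - v::real^'n))\<^sup>2 = (norm u)\<^sup>2 - 2*(u \<bullet> v) + (norm v)\<^sup>2"
  by (simp add: power2_norm_eq_inner inner_diff_left inner_diff_right inner_commute)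

lemma small_s:
  fixes A Bv :: real
  assumes "\<And>s. 0 < s \<Longrightarrow> s \<le> 1 \<Longrightarrow> 0 \<le> A + s * Bv" "Bv \<ge> 0"
  shows "0 \<le> A"
proof (rule ccontr)
  assume "\<not> 0 \<le> A"
  then have A: "A < 0" by simp
  define s where "s = min 1 (-A / (2*(Bv+1)))"
  have "-A / (2*(Bv+1)) > 0" using A assms(2) by (intro divide_pos_pos) auto
  then have s0: "0 < s" "s \<le> 1" by (auto simp: s_def)
  have "s * Bv \<le> (-A / (2*(Bv+1))) * Bv"
    using assms(2) by (intro mult_right_mono) (auto simp: s_def)
  also have "\<dots> \<le> -A/2"
  proof -
    have "(-A / (2*(Bv+1))) * Bv = (-A/2) * (Bv/(Bv+1))" using assms(2) by (simp add: field_simps)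
    also have "\<dots> \<le> (-A/2) * 1"
      using A assms(2) by (intro mult_left_mono) auto
    finally show ?thesis by simp
  qed
  finally have "A + s * Bv < 0" using A by linarith
  with assms(1)[OF s0] show False by simp
qed

lemma prox_exists:
  fixes c z :: "real^'n" and gj :: "real^'n \<Rightarrow> real" and B :: "'n set" and eta :: real
  assumes cv: "convex_on UNIV gj" and eta: "eta > 0"
  shows "\<exists>m. (\<forall>k. k\<notin>B \<longrightarrow> m$k = z$k) \<and> (\<forall>y. (\<forall>k. k\<notin>B \<longrightarrow> y$k = z$k) \<longrightarrow>
           c \<bullet> m + gj m + eta/2*(norm(m-z))\<^sup>2 \<le> c \<bullet> y + gj y + eta/2*(norm(y-z))\<^sup>2)"
proof -
  define S where "S = {y::real^'n. \<forall>k. k\<notin>B \<longrightarrow> y$k = z$k}"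
  define h where "h = (\<lambda>y. c \<bullet> y + gj y)"
  define \<Phi> where "\<Phi> = (\<lambda>y. h y + eta/2*(norm(y-z))\<^sup>2)"
  have contg: "continuous_on UNIV gj" using convex_on_continuous[OF open_UNIV cv] .
  have conth: "continuous_on UNIV h" unfolding h_def
    by (intro continuous_on_add[OF _ contg] continuous_intros)
  have contP: "continuous_on UNIV \<Phi>" unfolding \<Phi>_def
    by (intro continuous_on_add[OF conth] continuous_intros)
  have closedS: "closed S" unfolding S_def
    by (intro closed_Collect_all closed_Collect_imp closed_Collect_eq continuous_intros) auto
  have zS: "z \<in> S" by (simp add: S_def)
  have hconv: "h ((1-t) *\<^sub>R a + t *\<^sub>R b) \<le> (1-t) * h a + t * h b" if "0 \<le> t" "t \<le> 1" for t a b
    using convex_onD[OF cv, of t a b] that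
    by (simp add: h_def inner_add_right algebra_simps)
  have K1: "compact (cball z 1 \<inter> S)" using closedS by (intro compact_Int_closed) auto
  have zK1: "z \<in> cball z 1 \<inter> S" using zS by simp
  have "\<exists>x\<in>cball z 1 \<inter> S. \<forall>y\<in>cball z 1 \<inter> S. h x \<le> h y"
    using continuous_attains_inf[OF K1 _ continuous_on_subset[OF conth]] zK1 by blast
  then obtain u0 where u0: "u0 \<in> cball z 1 \<inter> S" "\<And>u. u \<in> cball z 1 \<inter> S \<Longrightarrow> h u0 \<le> h u"
    by blast
  define c0 where "c0 = h z - h u0"
  have c0: "c0 \<ge> 0" using u0(2)[of z] zS by (simp add: c0_def)
  have lower: "h z - norm (y - z) * c0 \<le> h y" if yS: "y \<in> S" and r1: "1 \<le> norm (y - z)" for y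
  proof -
    define r where "r = norm (y - z)"
    have r: "r \<ge> 1" using r1 by (simp add: r_def)
    define u where "u = (1 - 1/r) *\<^sub>R z + (1/r) *\<^sub>R y"
    have "u - z = (1/r) *\<^sub>R (y - z)" by (simp add: u_def algebra_simps)
    then have "norm (u - z) = 1" using r by (auto simp: r_def)
    then have "u \<in> cball z 1" by (simp add: dist_norm norm_minus_commute)
    moreover have "u \<in> S" using yS by (simp add: S_def u_def algebra_simps)
    ultimately have "h u0 \<le> h u" using u0 by auto
    also have "h u \<le> (1 - 1/r) * h z + (1/r) * h y"
      unfolding u_def using r by (intro hconv) auto
    finally have "r * h u0 \<le> r * ((1 - 1/r) * h z + (1/r) * h y)"
      using r by (intro mult_left_mono) auto
    also have "\<dots> = (r - 1) * h z + h y" using r by (simp add: field_simps)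
    finally show ?thesis by (simp add: r_def[symmetric] c0_def algebra_simps)
  qed
  define R where "R = max 1 (2*c0/eta)"
  have K: "compact (cball z R \<inter> S)" using closedS by (intro compact_Int_closed) auto
  have zK: "z \<in> cball z R \<inter> S" using zS by (auto simp: R_def)
  have "\<exists>x\<in>cball z R \<inter> S. \<forall>y\<in>cball z R \<inter> S. \<Phi> x \<le> \<Phi> y"
    using continuous_attains_inf[OF K _ continuous_on_subset[OF contP]] zK by blast
  then obtain m where m: "m \<in> cball z R \<inter> S" "\<And>u. u \<in> cball z R \<inter> S \<Longrightarrow> \<Phi> m \<le> \<Phi> u"
    by blast
  have "\<Phi> m \<le> \<Phi> y" if yS: "y \<in> S" for y
  proof (cases "norm (y - z) \<le> R")
    case True
    then have "y \<in> cball z R \<inter> S" using yS by (simp add: dist_norm norm_minus_commute)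
    then show ?thesis using m by auto
  next
    case False
    define r where "r = norm (y - z)"
    have rR: "r > R" using False by (simp add: r_def)
    then have r1: "r \<ge> 1" "r \<ge> 2*c0/eta" by (auto simp: R_def)
    have "2*c0 \<le> eta * r" using r1(2) eta by (simp add: field_simps)
    then have "2*c0*r \<le> eta * r * r" using r1 by (intro mult_right_mono) auto
    then have "r * c0 \<le> eta/2 * r\<^sup>2" by (simp add: power2_eq_square algebra_simps)
    moreover have "h z - r * c0 \<le> h y" using lower[OF yS] r1 by (simp add: r_def)
    ultimately have "\<Phi> z \<le> \<Phi> y" by (simp add: \<Phi>_def r_def)
    then show ?thesis using m(2)[OF zK] by simp
  qed
  then show ?thesis using m(1) unfolding S_def \<Phi>_def h_def by (intro exI[of _ m]) auto
qed


lemma prox_argmin: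
  fixes c z :: "real^'n" and gj :: "real^'n \<Rightarrow> real" and B :: "'n set" and eta :: real
  assumes cv: "convex_on UNIV gj" and eta: "eta > 0"
  defines "y \<equiv> arg_min (\<lambda>y. c \<bullet> y + gj y + eta/2*(norm(y-z))\<^sup>2) (\<lambda>y. \<forall>k. k\<notin>B \<longrightarrow> y$k = z$k)"
  shows "(\<forall>k. k\<notin>B \<longrightarrow> y$k = z$k) \<and> (\<forall>w. (\<forall>k. k\<notin>B \<longrightarrow> w$k = z$k) \<longrightarrow>
     c \<bullet> y + gj y + eta/2*(norm(y-z))\<^sup>2 + eta/2*(norm(w-y))\<^sup>2 \<le> c \<bullet> w + gj w + eta/2*(norm(w-z))\<^sup>2)"
proof -
  define \<Phi> where "\<Phi> = (\<lambda>y. c \<bullet> y + gj y + eta/2*(norm(y-z))\<^sup>2)"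
  define P where "P = (\<lambda>y::real^'n. \<forall>k. k\<notin>B \<longrightarrow> y$k = z$k)"
  obtain m where m: "P m" "\<And>y. P y \<Longrightarrow> \<Phi> m \<le> \<Phi> y"
    using prox_exists[OF cv eta, of B z c] unfolding P_def \<Phi>_def by blast
  have "is_arg_min \<Phi> P m" unfolding is_arg_min_def using m by (auto simp: not_less)
  then have "is_arg_min \<Phi> P y" unfolding y_def arg_min_def \<Phi>_def[symmetric] P_def[symmetric]
    by (rule someI)
  then have y: "P y" "\<And>w. P w \<Longrightarrow> \<Phi> y \<le> \<Phi> w" unfolding is_arg_min_def by (auto simp: not_less)
  have tp: "c \<bullet> y + gj y + eta/2*(norm(y-z))\<^sup>2 + eta/2*(norm(w-y))\<^sup>2 \<le> c \<bullet> w + gj w + eta/2*(norm(w-z))\<^sup>2"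
    if w: "P w" for w
  proof -
    define a where "a = (y - z) \<bullet> (w - y)"
    define b where "b = (norm (w - y))\<^sup>2"
    define N where "N = (norm (y - z))\<^sup>2"
    define A where "A = c \<bullet> (w - y) + gj w - gj y + eta * a"
    have b0: "b \<ge> 0" by (simp add: b_def)
    have "0 \<le> A + s * (eta * b / 2)" if s: "0 < s" "s \<le> 1" for s
    proof -
      define p where "p = y + s *\<^sub>R (w - y)"
      have pc: "p = (1 - s) *\<^sub>R y + s *\<^sub>R w" by (simp add: p_def algebra_simps)
      have Pp: "P p" using y(1) w by (simp add: P_def p_def)
      have g: "gj p \<le> (1 - s) * gj y + s * gj w"
        unfolding pc using convex_onD[OF cv, of s y w] s by auto
      have cp: "c \<bullet> p = c \<bullet> y + s * (c \<bullet> (w - y))" by (simp add: p_def inner_add_right)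
      have np: "(norm (p - z))\<^sup>2 = N + 2 * s * a + s\<^sup>2 * b"
      proof -
        have "(norm (p - z))\<^sup>2 = (norm ((y - z) + s *\<^sub>R (w - y)))\<^sup>2" by (simp add: p_def algebra_simps)
        also have "\<dots> = N + 2 * s * a + s\<^sup>2 * b"
          by (simp only: nsq) (simp add: N_def a_def b_def power_mult_distrib)
        finally show ?thesis .
      qed
      have "\<Phi> y \<le> \<Phi> p" using y(2)[OF Pp] .
      then have "c \<bullet> y + gj y + eta/2*N \<le> c \<bullet> y + s * (c \<bullet> (w - y)) + ((1 - s) * gj y + s * gj w) + eta/2 * (N + 2 * s * a + s\<^sup>2 * b)"
        using g by (simp add: \<Phi>_def cp np N_def)
      then have "0 \<le> s * (A + s * (eta * b / 2))"
        by (simp add: A_def algebra_simps power2_eq_square)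
      then show ?thesis using s by (simp add: zero_le_mult_iff)
    qed
    then have A0: "0 \<le> A" using b0 eta by (intro small_s[of A "eta * b / 2"]) auto
    have "(norm (w - z))\<^sup>2 = b + 2 * a + N"
    proof -
      have "w - z = (w - y) + (y - z)" by simp
      then show ?thesis by (simp only: nsq) (simp add: a_def b_def N_def inner_commute)
    qed
    then show ?thesis using A0 by (simp add: A_def b_def N_def algebra_simps inner_diff_right)
  qed
  show ?thesis using y(1) tp unfolding P_def by blast
qed


lemma step_ineq:
  fixes G z xs :: "real^'n" and gj :: "real^'n \<Rightarrow> real" and B :: "'n set" and eta :: real
  assumes cv: "convex_on UNIV gj" and eta: "eta > 0"
    and gb: "\<forall>x y. (\<forall>k\<in>B. x$k = y$k) \<longrightarrow> gj x = gj y"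
  defines "y \<equiv> arg_min (\<lambda>y. blk_proj B G \<bullet> y + gj y + eta/2*(norm(y-z))\<^sup>2) (\<lambda>y. \<forall>k. k\<notin>B \<longrightarrow> y$k = z$k)"
  shows "(\<forall>k. k\<notin>B \<longrightarrow> y$k = z$k) \<and>
     blk_proj B G \<bullet> (z - xs) + gj y - gj xs \<le> eta/2*((norm(xs - z))\<^sup>2 - (norm(xs - y))\<^sup>2) + (norm(blk_proj B G))\<^sup>2/(2*eta)"
proof -
  define c where "c = blk_proj B G"
  define w where "w = (\<chi> k. if k \<in> B then xs$k else z$k)"
  have Pw: "\<forall>k. k\<notin>B \<longrightarrow> w$k = z$k" by (simp add: w_def)
  have pa: "(\<forall>k. k\<notin>B \<longrightarrow> y$k = z$k) \<and> (\<forall>w. (\<forall>k. k\<notin>B \<longrightarrow> w$k = z$k) \<longrightarrow>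
     c \<bullet> y + gj y + eta/2*(norm(y-z))\<^sup>2 + eta/2*(norm(w-y))\<^sup>2 \<le> c \<bullet> w + gj w + eta/2*(norm(w-z))\<^sup>2)"
    unfolding y_def c_def by (rule prox_argmin[OF cv eta])
  then have Py: "\<forall>k. k\<notin>B \<longrightarrow> y$k = z$k" by blast
  from pa Pw have TP: "c \<bullet> y + gj y + eta/2*(norm(y-z))\<^sup>2 + eta/2*(norm(w-y))\<^sup>2 \<le> c \<bullet> w + gj w + eta/2*(norm(w-z))\<^sup>2"
    by blast
  have gw: "gj w = gj xs" using gb by (simp add: w_def)
  have cw: "c \<bullet> w = c \<bullet> xs"
    unfolding inner_vec_def by (rule sum.cong) (auto simp: c_def blk_proj_def w_def)
  have nrm: "(norm(w-z))\<^sup>2 - (norm(w-y))\<^sup>2 = (norm(xs-z))\<^sup>2 - (norm(xs-y))\<^sup>2"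
  proof -
    have "(norm(w-z))\<^sup>2 - (norm(w-y))\<^sup>2 = (\<Sum>k\<in>UNIV. (w-z)$k * (w-z)$k - (w-y)$k * (w-y)$k)"
      by (simp add: power2_norm_eq_inner inner_vec_def sum_subtractf)
    also have "\<dots> = (\<Sum>k\<in>UNIV. (xs-z)$k * (xs-z)$k - (xs-y)$k * (xs-y)$k)"
      by (rule sum.cong) (auto simp: w_def Py)
    also have "\<dots> = (norm(xs-z))\<^sup>2 - (norm(xs-y))\<^sup>2"
      by (simp add: power2_norm_eq_inner inner_vec_def sum_subtractf)
    finally show ?thesis .
  qed
  have ccs: "c \<bullet> z - c \<bullet> y \<le> (norm c)\<^sup>2/(2*eta) + eta/2*(norm(y-z))\<^sup>2"
  proof -
    have "0 \<le> (norm (c - eta *\<^sub>R (z - y)))\<^sup>2" by simp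
    also have "\<dots> = (norm c)\<^sup>2 - 2*eta*(c \<bullet> z - c \<bullet> y) + eta\<^sup>2 * (norm(y-z))\<^sup>2"
      by (simp add: nsq2[of c] inner_diff_right power_mult_distrib norm_minus_commute)
    finally have "2*eta*(c \<bullet> z - c \<bullet> y) \<le> (norm c)\<^sup>2 + eta\<^sup>2 * (norm(y-z))\<^sup>2" by simp
    then have "(c \<bullet> z - c \<bullet> y) \<le> ((norm c)\<^sup>2 + eta\<^sup>2 * (norm(y-z))\<^sup>2) / (2*eta)"
      using eta by (simp add: field_simps)
    also have "\<dots> = (norm c)\<^sup>2/(2*eta) + eta/2*(norm(y-z))\<^sup>2"
      using eta by (simp add: field_simps power2_eq_square)
    finally show ?thesis .
  qed
  have "c \<bullet> (z - xs) + gj y - gj xs \<le> eta/2*((norm(xs - z))\<^sup>2 - (norm(xs - y))\<^sup>2) + (norm c)\<^sup>2/(2*eta)"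
  proof -
    have e1: "c \<bullet> (z - xs) = c \<bullet> z - c \<bullet> xs" by (simp add: inner_diff_right)
    have e2: "eta/2*((norm(xs - z))\<^sup>2 - (norm(xs - y))\<^sup>2) = eta/2*(norm(w-z))\<^sup>2 - eta/2*(norm(w-y))\<^sup>2"
      using nrm by (simp add: right_diff_distrib[symmetric])
    show ?thesis unfolding e1 e2 using TP ccs gw cw by linarith
  qed
  then show ?thesis using Py by (simp add: c_def)
qed




lemma block_sum:
  fixes blk :: "nat \<Rightarrow> 'n::finite set"
  assumes disj: "\<forall>j\<in>{1..J}. \<forall>j'\<in>{1..J}. j \<noteq> j' \<longrightarrow> blk j \<inter> blk j' = {}"
    and cover: "(\<Union>j\<in>{1..J}. blk j) = UNIV"
  shows "(\<Sum>j\<in>{1..J}. \<Sum>k\<in>blk j. a k) = (\<Sum>k\<in>UNIV. a k)"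
proof -
  have "(\<Sum>k\<in>UNIV. a k) = (\<Sum>k\<in>(\<Union>j\<in>{1..J}. blk j). a k)" using cover by simp
  also have "\<dots> = (\<Sum>j\<in>{1..J}. \<Sum>k\<in>blk j. a k)"
    using disj by (intro sum.UNION_disjoint) auto
  finally show ?thesis by simp
qed

lemma bp_inner: "blk_proj B v \<bullet> w = (\<Sum>k\<in>B. v$k * w$k)"
proof -
  have "blk_proj B v \<bullet> w = (\<Sum>k\<in>UNIV. if k \<in> B then v$k * w$k else 0)"
    unfolding inner_vec_def blk_proj_def by (rule sum.cong) auto
  also have "\<dots> = (\<Sum>k\<in>UNIV \<inter> B. v$k * w$k)" by (rule sum.inter_restrict[symmetric]) simp
  finally show ?thesis by simp
qed

lemma bp_norm: "(norm (blk_proj B v))\<^sup>2 = (\<Sum>k\<in>B. v$k * v$k)"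
proof -
  have "(norm (blk_proj B v))\<^sup>2 = blk_proj B v \<bullet> blk_proj B v" by (simp add: power2_norm_eq_inner)
  also have "\<dots> = (\<Sum>k\<in>B. v$k * (blk_proj B v)$k)" by (rule bp_inner)
  also have "\<dots> = (\<Sum>k\<in>B. v$k * v$k)" by (rule sum.cong) (auto simp: blk_proj_def)
  finally show ?thesis .
qed

lemma gsum_step:
  fixes g :: "nat \<Rightarrow> real^'n \<Rightarrow> real" and blk :: "nat \<Rightarrow> 'n set"
  assumes disj: "\<forall>j\<in>{1..J}. \<forall>j'\<in>{1..J}. j \<noteq> j' \<longrightarrow> blk j \<inter> blk j' = {}"
    and gb: "\<forall>j\<in>{1..J}. \<forall>x y. (\<forall>k\<in>blk j. x $ k = y $ k) \<longrightarrow> g j x = g j y"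
    and j: "j \<in> {1..J}" and P: "\<forall>k. k \<notin> blk j \<longrightarrow> y$k = z$k"
  shows "(\<Sum>j\<in>{1..J}. g j y) - (\<Sum>j\<in>{1..J}. g j z) = g j y - g j z"
proof -
  have "(\<Sum>j\<in>{1..J}. g j y) - (\<Sum>j\<in>{1..J}. g j z) = (\<Sum>j'\<in>{1..J}. g j' y - g j' z)"
    by (simp add: sum_subtractf)
  also have "\<dots> = (\<Sum>j'\<in>{1..J}. if j' = j then g j y - g j z else 0)"
  proof (rule sum.cong)
    fix j' assume j': "j' \<in> {1..J}"
    show "g j' y - g j' z = (if j' = j then g j y - g j z else 0)"
    proof (cases "j' = j")
      case False
      then have "\<forall>k\<in>blk j'. y$k = z$k" using disj j j' P by blast
      then show ?thesis using gb j' False by auto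
    qed simp
  qed simp
  also have "\<dots> = g j y - g j z" using j by (simp add: sum.delta)
  finally show ?thesis .
qed


lemma bp_inner_sum:
  fixes blk :: "nat \<Rightarrow> 'n::finite set"
  assumes disj: "\<forall>j\<in>{1..J}. \<forall>j'\<in>{1..J}. j \<noteq> j' \<longrightarrow> blk j \<inter> blk j' = {}"
    and cover: "(\<Union>j\<in>{1..J}. blk j) = UNIV"
  shows "(\<Sum>j\<in>{1..J}. blk_proj (blk j) v \<bullet> w) = v \<bullet> w"
proof -
  have "(\<Sum>j\<in>{1..J}. blk_proj (blk j) v \<bullet> w) = (\<Sum>j\<in>{1..J}. \<Sum>k\<in>blk j. v$k * w$k)"
    by (simp only: bp_inner)
  also have "\<dots> = (\<Sum>k\<in>UNIV. v$k * w$k)" by (rule block_sum[OF disj cover])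
  also have "\<dots> = v \<bullet> w" by (simp add: inner_vec_def)
  finally show ?thesis .
qed

lemma bp_norm_sum:
  fixes blk :: "nat \<Rightarrow> 'n::finite set"
  assumes disj: "\<forall>j\<in>{1..J}. \<forall>j'\<in>{1..J}. j \<noteq> j' \<longrightarrow> blk j \<inter> blk j' = {}"
    and cover: "(\<Union>j\<in>{1..J}. blk j) = UNIV"
  shows "(\<Sum>j\<in>{1..J}. (norm (blk_proj (blk j) v))\<^sup>2) = (norm v)\<^sup>2"
proof -
  have "(\<Sum>j\<in>{1..J}. (norm (blk_proj (blk j) v))\<^sup>2) = (\<Sum>j\<in>{1..J}. \<Sum>k\<in>blk j. v$k * v$k)"
    by (simp only: bp_norm)
  also have "\<dots> = (\<Sum>k\<in>UNIV. v$k * v$k)" by (rule block_sum[OF disj cover])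
  also have "\<dots> = (norm v)\<^sup>2" by (simp add: inner_vec_def power2_norm_eq_inner)
  finally show ?thesis .
qed

lemma step_avg:
  fixes f :: "nat \<Rightarrow> real^'n \<Rightarrow> real"
    and gf :: "nat \<Rightarrow> real^'n \<Rightarrow> real^'n"
    and g :: "nat \<Rightarrow> real^'n \<Rightarrow> real"
    and blk :: "nat \<Rightarrow> 'n set"
    and I J :: nat and Rf eta :: real and z xs :: "real^'n"
  assumes blk_disj: "\<forall>j\<in>{1..J}. \<forall>j'\<in>{1..J}. j \<noteq> j' \<longrightarrow> blk j \<inter> blk j' = {}"
    and blk_cover: "(\<Union>j\<in>{1..J}. blk j) = UNIV"
    and f_convex: "\<forall>i\<in>{1..I}. convex_on UNIV (f i)"
    and f_grad: "\<forall>i\<in>{1..I}. \<forall>x. (f i has_derivative (\<lambda>h. gf i x \<bullet> h)) (at x)"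
    and g_convex: "\<forall>j\<in>{1..J}. convex_on UNIV (g j)"
    and g_block: "\<forall>j\<in>{1..J}. \<forall>x y. (\<forall>k\<in>blk j. x $ k = y $ k) \<longrightarrow> g j x = g j y"
    and I_pos: "I \<ge> 1" and eta: "eta > 0" and gbd: "\<forall>i\<in>{1..I}. norm (gf i z) \<le> Rf"
  shows "(\<Sum>y\<in>{1..I}\<times>{1..J}.
      ((1 / real I) * (\<Sum>i\<in>{1..I}. f i z) + (\<Sum>j\<in>{1..J}. g j z))
      - ((1 / real I) * (\<Sum>i\<in>{1..I}. f i xs) + (\<Sum>j\<in>{1..J}. g j xs))
      + real J * ((\<Sum>j\<in>{1..J}. g j (orbcd_step gf g blk eta z y)) - (\<Sum>j\<in>{1..J}. g j z))
      - real J * eta / 2 * ((norm (xs - z))\<^sup>2 - (norm (xs - orbcd_step gf g blk eta z y))\<^sup>2)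
      - Rf\<^sup>2 / (2 * eta)) \<le> 0"
proof -
  define K0 where "K0 = ((1 / real I) * (\<Sum>i\<in>{1..I}. f i z) + (\<Sum>j\<in>{1..J}. g j z))
      - ((1 / real I) * (\<Sum>i\<in>{1..I}. f i xs) + (\<Sum>j\<in>{1..J}. g j xs))"
  define K1 where "K1 = Rf\<^sup>2 / (2 * eta)"
  define U where "U = (\<lambda>i j. K0 + real J * (g j xs - g j z) + real J / (2*eta) * (norm (blk_proj (blk j) (gf i z)))\<^sup>2
       - real J * (blk_proj (blk j) (gf i z) \<bullet> (z - xs)) - K1)"
  have per: "K0 + real J * ((\<Sum>j'\<in>{1..J}. g j' (orbcd_step gf g blk eta z (i,j))) - (\<Sum>j\<in>{1..J}. g j z))
      - real J * eta / 2 * ((norm (xs - z))\<^sup>2 - (norm (xs - orbcd_step gf g blk eta z (i,j)))\<^sup>2) - K1 \<le> U i j"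
    if ij: "i \<in> {1..I}" "j \<in> {1..J}" for i j
  proof -
    define yy where "yy = orbcd_step gf g blk eta z (i,j)"
    have yy: "yy = arg_min (\<lambda>y. blk_proj (blk j) (gf i z) \<bullet> y + g j y + eta/2*(norm(y-z))\<^sup>2) (\<lambda>y. \<forall>k. k\<notin>blk j \<longrightarrow> y$k = z$k)"
      by (simp add: yy_def orbcd_step_def)
    have si: "(\<forall>k. k\<notin>blk j \<longrightarrow> yy$k = z$k) \<and>
     blk_proj (blk j) (gf i z) \<bullet> (z - xs) + g j yy - g j xs \<le> eta/2*((norm(xs - z))\<^sup>2 - (norm(xs - yy))\<^sup>2) + (norm(blk_proj (blk j) (gf i z)))\<^sup>2/(2*eta)"
      unfolding yy using g_convex g_block ij eta by (intro step_ineq) auto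
    have gs: "(\<Sum>j\<in>{1..J}. g j yy) - (\<Sum>j\<in>{1..J}. g j z) = g j yy - g j z"
      using si ij by (intro gsum_step[OF blk_disj g_block]) auto
    define c where "c = blk_proj (blk j) (gf i z) \<bullet> (z - xs)"
    define nc where "nc = (norm(blk_proj (blk j) (gf i z)))\<^sup>2"
    define Dd where "Dd = (norm(xs - z))\<^sup>2 - (norm(xs - yy))\<^sup>2"
    have "g j yy - g j z \<le> (g j xs - g j z) + eta/2 * Dd + nc/(2*eta) - c"
      using si by (simp add: c_def nc_def Dd_def)
    then have "real J * (g j yy - g j z) \<le> real J * ((g j xs - g j z) + eta/2 * Dd + nc/(2*eta) - c)"
      by (intro mult_left_mono) auto
    then show ?thesis unfolding yy_def[symmetric] gs
      by (simp add: U_def c_def nc_def Dd_def algebra_simps)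
  qed
  have sumU: "(\<Sum>y\<in>{1..I}\<times>{1..J}. U (fst y) (snd y)) \<le> 0"
  proof -
    define Sf where "Sf = (\<Sum>i\<in>{1..I}. f i z - f i xs)"
    define Sn where "Sn = (\<Sum>i\<in>{1..I}. (norm (gf i z))\<^sup>2)"
    define Sg where "Sg = (\<Sum>i\<in>{1..I}. gf i z \<bullet> (z - xs))"
    have Sn: "Sn \<le> real I * Rf\<^sup>2"
    proof -
      have "Sn \<le> (\<Sum>i\<in>{1..I}. Rf\<^sup>2)" unfolding Sn_def
        using gbd by (intro sum_mono power_mono) auto
      then show ?thesis by simp
    qed
    have Sg: "Sf \<le> Sg" unfolding Sf_def Sg_def
    proof (intro sum_mono)
      fix i assume i: "i \<in> {1..I}"
      have "f i z + gf i z \<bullet> (xs - z) \<le> f i xs"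
        using f_convex f_grad i by (intro tangent) auto
      then show "f i z - f i xs \<le> gf i z \<bullet> (z - xs)" by (simp add: inner_diff_right)
    qed
    have perI: "(\<Sum>j\<in>{1..J}. U i j) = real J * K0 + real J * ((\<Sum>j\<in>{1..J}. g j xs) - (\<Sum>j\<in>{1..J}. g j z))
        + real J / (2*eta) * (norm (gf i z))\<^sup>2 - real J * (gf i z \<bullet> (z - xs)) - real J * K1" for i
    proof -
      have a: "(\<Sum>j\<in>{1..J}. U i j) = (\<Sum>j\<in>{1..J}. K0) + (\<Sum>j\<in>{1..J}. real J * (g j xs - g j z))
        + (\<Sum>j\<in>{1..J}. real J / (2*eta) * (norm (blk_proj (blk j) (gf i z)))\<^sup>2)
        - (\<Sum>j\<in>{1..J}. real J * (blk_proj (blk j) (gf i z) \<bullet> (z - xs))) - (\<Sum>j\<in>{1..J}. K1)"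
        unfolding U_def by (simp only: sum.distrib sum_subtractf)
      have b: "(\<Sum>j\<in>{1..J}. real J / (2*eta) * (norm (blk_proj (blk j) (gf i z)))\<^sup>2) = real J / (2*eta) * (norm (gf i z))\<^sup>2"
        by (simp only: sum_distrib_left[symmetric] bp_norm_sum[OF blk_disj blk_cover])
      have c: "(\<Sum>j\<in>{1..J}. real J * (blk_proj (blk j) (gf i z) \<bullet> (z - xs))) = real J * (gf i z \<bullet> (z - xs))"
        by (simp only: sum_distrib_left[symmetric] bp_inner_sum[OF blk_disj blk_cover])
      have d: "(\<Sum>j\<in>{1..J}. real J * (g j xs - g j z)) = real J * ((\<Sum>j\<in>{1..J}. g j xs) - (\<Sum>j\<in>{1..J}. g j z))"
        by (simp only: sum_distrib_left[symmetric] sum_subtractf)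
      show ?thesis unfolding a b c d by simp
    qed
    have "(\<Sum>y\<in>{1..I}\<times>{1..J}. U (fst y) (snd y)) = (\<Sum>i\<in>{1..I}. \<Sum>j\<in>{1..J}. U i j)"
      by (simp add: sum.cartesian_product case_prod_beta)
    also have "\<dots> = real I * real J * K0 + real I * real J * ((\<Sum>j\<in>{1..J}. g j xs) - (\<Sum>j\<in>{1..J}. g j z))
        + real J / (2*eta) * Sn - real J * Sg - real I * real J * K1"
      unfolding perI Sn_def Sg_def by (simp add: sum.distrib sum_subtractf sum_distrib_left algebra_simps)
    also have "K0 = Sf / real I + (\<Sum>j\<in>{1..J}. g j z) - (\<Sum>j\<in>{1..J}. g j xs)"
      unfolding K0_def Sf_def by (simp add: sum_subtractf diff_divide_distrib)
    also have "real I * real J * (Sf / real I + (\<Sum>j\<in>{1..J}. g j z) - (\<Sum>j\<in>{1..J}. g j xs))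
       + real I * real J * ((\<Sum>j\<in>{1..J}. g j xs) - (\<Sum>j\<in>{1..J}. g j z))
       + real J / (2*eta) * Sn - real J * Sg - real I * real J * K1
       = real J * (Sf - Sg) + real J / (2*eta) * (Sn - real I * Rf\<^sup>2)"
      using I_pos eta by (simp add: K1_def field_simps)
    also have "\<dots> \<le> 0"
    proof -
      have "real J * (Sf - Sg) \<le> 0" using Sg by (simp add: mult_nonneg_nonpos)
      moreover have "real J / (2*eta) * (Sn - real I * Rf\<^sup>2) \<le> 0"
        using Sn eta by (intro mult_nonneg_nonpos) auto
      ultimately show ?thesis by simp
    qed
    finally show ?thesis .
  qed
  have "(\<Sum>y\<in>{1..I}\<times>{1..J}. K0 + real J * ((\<Sum>j\<in>{1..J}. g j (orbcd_step gf g blk eta z y)) - (\<Sum>j\<in>{1..J}. g j z))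
      - real J * eta / 2 * ((norm (xs - z))\<^sup>2 - (norm (xs - orbcd_step gf g blk eta z y))\<^sup>2) - K1)
     \<le> (\<Sum>y\<in>{1..I}\<times>{1..J}. U (fst y) (snd y))"
    by (intro sum_mono) (use per in auto)
  with sumU show ?thesis unfolding K0_def K1_def by simp
qed




lemma exp_mono_supp:
  assumes "finite (set_pmf M)" "\<And>a. a \<in> set_pmf M \<Longrightarrow> (\<phi>::_\<Rightarrow>real) a \<le> \<psi> a"
  shows "measure_pmf.expectation M \<phi> \<le> measure_pmf.expectation M \<psi>"
  using assms by (simp add: exp_finite) (intro sum_mono mult_left_mono, auto)

lemma exp_lin:
  assumes "finite (set_pmf M)" "finite K"
  shows "measure_pmf.expectation M (\<lambda>a. (\<Sum>k\<in>K. \<phi> k a) + (c::real))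
     = (\<Sum>k\<in>K. measure_pmf.expectation M (\<phi> k)) + c"
proof -
  have "measure_pmf.expectation M (\<lambda>a. (\<Sum>k\<in>K. \<phi> k a) + c)
     = (\<Sum>a\<in>set_pmf M. pmf M a * ((\<Sum>k\<in>K. \<phi> k a) + c))" using assms by (simp add: exp_finite)
  also have "\<dots> = (\<Sum>k\<in>K. \<Sum>a\<in>set_pmf M. pmf M a * \<phi> k a) + c * (\<Sum>a\<in>set_pmf M. pmf M a)"
    by (simp add: algebra_simps sum.distrib sum_distrib_left sum_distrib_right sum.swap[of _ K])
  also have "(\<Sum>a\<in>set_pmf M. pmf M a) = 1" using assms by (intro sum_pmf_eq_1) auto
  finally show ?thesis using assms by (simp add: exp_finite)
qed

lemma exp_scale:
  assumes "finite (set_pmf M)"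
  shows "measure_pmf.expectation M (\<lambda>a. (c::real) * \<phi> a) = c * measure_pmf.expectation M \<phi>"
  using assms by (simp add: exp_finite sum_distrib_left algebra_simps)

lemma exp_nonpos:
  assumes "finite (set_pmf M)" "\<And>a. a \<in> set_pmf M \<Longrightarrow> (\<phi>::_\<Rightarrow>real) a \<le> 0"
  shows "measure_pmf.expectation M \<phi> \<le> 0"
  using assms by (simp add: exp_finite) (intro sum_nonpos mult_nonneg_nonpos, auto)

lemma tele_eta:
  fixes eta Dl :: "nat \<Rightarrow> real"
  assumes mono: "\<And>k. eta k \<le> eta (Suc k)" and e0: "eta 0 \<ge> 0" and Dl: "\<And>k. 0 \<le> Dl k \<and> Dl k \<le> D2"
  shows "(\<Sum>k<Suc m. eta k * (Dl k - Dl (Suc k))) \<le> eta m * D2 - eta m * Dl (Suc m)"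
proof (induction m)
  case 0
  have "eta 0 * Dl 0 \<le> eta 0 * D2" using e0 Dl by (intro mult_left_mono) auto
  then show ?case by (simp add: algebra_simps)
next
  case (Suc m)
  have "(eta (Suc m) - eta m) * Dl (Suc m) \<le> (eta (Suc m) - eta m) * D2"
    using mono[of m] Dl by (intro mult_left_mono) auto
  then show ?case using Suc by (simp add: algebra_simps)
qed

lemma sqrt_step:
  fixes m :: nat
  shows "1 / (2 * sqrt (real (Suc (Suc m)))) \<le> sqrt (real (Suc (Suc m))) - sqrt (real (Suc m))"
proof -
  define a where "a = sqrt (real (Suc m))"
  define b where "b = sqrt (real (Suc (Suc m)))"
  have a0: "a > 0" by (simp add: a_def)
  have ab: "a \<le> b" by (simp add: a_def b_def)
  have sq: "b * b - a * a = 1" by (simp add: a_def b_def)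
  have "(b - a) * (b + a) = 1" using sq by (simp add: algebra_simps)
  then have "b - a = 1 / (b + a)" using a0 ab by (simp add: field_simps)
  also have "1 / (b + a) \<ge> 1 / (2 * b)" using a0 ab by (intro divide_left_mono) auto
  finally show ?thesis by (simp add: a_def b_def)
qed

lemma sqrt_sum:
  fixes m :: nat
  shows "(\<Sum>k<Suc m. 1 / (2 * sqrt (real (Suc k)))) \<le> sqrt (real (Suc m)) - 1/2"
proof (induction m)
  case 0 then show ?case by simp
next
  case (Suc m)
  then show ?case using sqrt_step[of m] by simp
qed

lemma iter_cong:
  assumes "\<forall>t<m. h t = h' t"
  shows "orbcd_iter gf g blk L h m = orbcd_iter gf g blk L h' m"
  using assms by (induction m) auto




theorem theorem3:
  fixes f :: "nat \<Rightarrow> real^'n \<Rightarrow> real"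
    and gf :: "nat \<Rightarrow> real^'n \<Rightarrow> real^'n"
    and g :: "nat \<Rightarrow> real^'n \<Rightarrow> real"
    and blk :: "nat \<Rightarrow> 'n set"
    and I J T :: nat
    and Lj :: "nat \<Rightarrow> real"
    and Rf D :: real
    and X :: "(real^'n) set"
    and xstar :: "real^'n"
  assumes I_pos: "I \<ge> 1" and J_pos: "J \<ge> 1" and T_pos: "T \<ge> 1"
    and blk_nonempty: "\<forall>j\<in>{1..J}. blk j \<noteq> {}"
    and blk_disj: "\<forall>j\<in>{1..J}. \<forall>j'\<in>{1..J}. j \<noteq> j' \<longrightarrow> blk j \<inter> blk j' = {}"
    and blk_cover: "(\<Union>j\<in>{1..J}. blk j) = UNIV"
    and f_convex: "\<forall>i\<in>{1..I}. convex_on UNIV (f i)"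
    and f_grad: "\<forall>i\<in>{1..I}. \<forall>x. (f i has_derivative (\<lambda>h. gf i x \<bullet> h)) (at x)"
    and g_convex: "\<forall>j\<in>{1..J}. convex_on UNIV (g j)"
    and g_block: "\<forall>j\<in>{1..J}. \<forall>x y. (\<forall>k\<in>blk j. x $ k = y $ k) \<longrightarrow> g j x = g j y"
    and xstar_min: "\<forall>y. (1 / real I) * (\<Sum>i\<in>{1..I}. f i xstar) + (\<Sum>j\<in>{1..J}. g j xstar)
                       \<le> (1 / real I) * (\<Sum>i\<in>{1..I}. f i y) + (\<Sum>j\<in>{1..J}. g j y)"
    and blk_lip: "\<forall>i\<in>{1..I}. \<forall>j\<in>{1..J}. \<forall>x h. (\<forall>k. k \<notin> blk j \<longrightarrow> h $ k = 0) \<longrightarrow>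
          norm (blk_proj (blk j) (gf i (x + h)) - blk_proj (blk j) (gf i x)) \<le> Lj j * norm h"
    and grad_bound: "\<forall>h. (\<forall>k. h k \<in> {1..I} \<times> {1..J}) \<longrightarrow> (\<forall>t. \<forall>i\<in>{1..I}.
          norm (gf i (orbcd_iter gf g blk (Max (Lj ` {1..J})) h t)) \<le> Rf)"
    and iter_in_X: "\<forall>h. (\<forall>k. h k \<in> {1..I} \<times> {1..J}) \<longrightarrow>
          (\<forall>t. orbcd_iter gf g blk (Max (Lj ` {1..J})) h t \<in> X)"
    and xstar_in_X: "xstar \<in> X"
    and X_bounded: "bounded X" and X_diam: "diameter X = D"
  shows "\<forall>x. measure_pmf.expectation
              (Pi_pmf {..<T - 1} undefined (\<lambda>_. pmf_of_set ({1..I} \<times> {1..J})))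
              (\<lambda>h. let xbar = (1 / real T) *\<^sub>R (\<Sum>k<T. orbcd_iter gf g blk (Max (Lj ` {1..J})) h k)
                   in (1 / real I) * (\<Sum>i\<in>{1..I}. f i xbar) + (\<Sum>j\<in>{1..J}. g j xbar))
            - ((1 / real I) * (\<Sum>i\<in>{1..I}. f i x) + (\<Sum>j\<in>{1..J}. g j x))
          \<le> real J * ((sqrt (real T) + Max (Lj ` {1..J})) / 2 * D\<^sup>2 + sqrt (real T) * Rf\<^sup>2
                + (\<Sum>j\<in>{1..J}. g j 0) - (\<Sum>j\<in>{1..J}. g j xstar)) / real T"
proof -
  define L where "L = Max (Lj ` {1..J})"
  define S where "S = {1..I} \<times> {1..J}"
  define P where "P = Pi_pmf {..<T - 1} undefined (\<lambda>_. pmf_of_set S)"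
  define Xi where "Xi = (\<lambda>h m. orbcd_iter gf g blk L h m)"
  define Fo where "Fo = (\<lambda>x. (1 / real I) * (\<Sum>i\<in>{1..I}. f i x) + (\<Sum>j\<in>{1..J}. g j x))"
  define gs where "gs = (\<lambda>x. \<Sum>j\<in>{1..J}. g j x)"
  define Fs where "Fs = Fo xstar"
  define eta where "eta = (\<lambda>k::nat. sqrt (real (Suc k)) + L)"
  define C where "C = real J * ((sqrt (real T) + L) / 2 * D\<^sup>2 + sqrt (real T) * Rf\<^sup>2 + gs 0 - gs xstar)"
  define A where "A = (\<lambda>k h. Fo (Xi h k) - Fs + real J * (gs (Xi h (Suc k)) - gs (Xi h k))
      - real J * eta k / 2 * ((norm (xstar - Xi h k))\<^sup>2 - (norm (xstar - Xi h (Suc k)))\<^sup>2) - Rf\<^sup>2 / (2 * eta k))"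
  define ext where "ext = (\<lambda>h::nat \<Rightarrow> nat \<times> nat. \<lambda>t. if t < T - 1 then h t else (1,1))"
  have S_ne: "S \<noteq> {}" "finite S" using I_pos J_pos by (auto simp: S_def)
  have one_S: "(1,1) \<in> S" using I_pos J_pos by (auto simp: S_def)
  have finP: "finite (set_pmf P)" unfolding P_def by (rule finite_set_Pi_pmf) (use S_ne in auto)
  have supp: "h t \<in> S" if "h \<in> set_pmf P" "t < T - 1" for h t
    using that S_ne by (auto simp: P_def set_Pi_pmf PiE_dflt_def)
  have good_ext: "\<forall>t. ext h t \<in> S" if "h \<in> set_pmf P" for h
    using supp[OF that] one_S by (auto simp: ext_def)
  have good_ext': "\<forall>t. ext h t \<in> {1..I} \<times> {1..J}" if "h \<in> set_pmf P" for h
    using good_ext[OF that] by (simp add: S_def)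
  have Xi_ext: "Xi h m = Xi (ext h) m" if "h \<in> set_pmf P" "m \<le> T - 1" for h m
    unfolding Xi_def using that by (intro iter_cong) (auto simp: ext_def)
  have L0: "L \<ge> 0"
  proof -
    have j1: "1 \<in> {1..J}" using J_pos by simp
    obtain k0 where k0: "k0 \<in> blk 1" using blk_nonempty j1 by blast
    have i1: "1 \<in> {1..I}" using I_pos by simp
    have "\<forall>k. k \<notin> blk 1 \<longrightarrow> axis k0 (1::real) $ k = 0" using k0 by (auto simp: axis_def)
    then have "norm (blk_proj (blk 1) (gf 1 (0 + axis k0 1)) - blk_proj (blk 1) (gf 1 0)) \<le> Lj 1 * norm (axis k0 (1::real))"
      using blk_lip i1 j1 by blast
    then have "0 \<le> Lj 1 * norm (axis k0 (1::real))" using norm_ge_zero order_trans by blast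
    then have "0 \<le> Lj 1" by simp
    also have "Lj 1 \<le> L" unfolding L_def using j1 by (intro Max_ge) auto
    finally show ?thesis .
  qed
  have Rf0: "Rf \<ge> 0"
  proof -
    have hk: "\<forall>k. (\<lambda>_::nat. (1::nat,1::nat)) k \<in> {1..I} \<times> {1..J}" using one_S by (simp add: S_def)
    have i1: "1 \<in> {1..I}" using I_pos by simp
    have "norm (gf 1 (orbcd_iter gf g blk (Max (Lj ` {1..J})) (\<lambda>_. (1,1)) 0)) \<le> Rf"
      by (rule grad_bound[rule_format]) (use hk i1 in auto)
    then show ?thesis using norm_ge_zero order_trans by blast
  qed
  have eta1: "eta k \<ge> 1" for k
  proof -
    have "1 \<le> sqrt (real (Suc k))" by simp
    then show ?thesis using L0 unfolding eta_def by linarith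
  qed
  have eta0: "eta k > 0" for k using eta1[of k] by simp
  have claim1: "measure_pmf.expectation P (A k) \<le> 0" if k: "k < T - 1" for k
  proof -
    have "measure_pmf.expectation P (A k)
        = measure_pmf.expectation P (\<lambda>h. measure_pmf.expectation (pmf_of_set S) (\<lambda>y. A k (h(k:=y))))"
      unfolding P_def by (rule resample) (use S_ne k in auto)
    also have "\<dots> \<le> 0"
    proof (rule exp_nonpos[OF finP])
      fix h assume h: "h \<in> set_pmf P"
      define z where "z = Xi (ext h) k"
      have e1: "Xi (h(k:=y)) k = z" for y
      proof -
        have "Xi (h(k:=y)) k = Xi h k" unfolding Xi_def by (intro iter_cong) auto
        also have "\<dots> = z" unfolding z_def using h k by (intro Xi_ext) auto
        finally show ?thesis .
      qed
      have e2: "Xi (h(k:=y)) (Suc k) = orbcd_step gf g blk (eta k) z y" for y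
        using e1[of y] by (simp add: Xi_def eta_def)
      have gb: "\<forall>i\<in>{1..I}. norm (gf i z) \<le> Rf"
        using grad_bound good_ext'[OF h] unfolding z_def Xi_def L_def by blast
      have "(\<Sum>y\<in>S. A k (h(k:=y))) = (\<Sum>y\<in>{1..I}\<times>{1..J}.
          ((1 / real I) * (\<Sum>i\<in>{1..I}. f i z) + (\<Sum>j\<in>{1..J}. g j z))
          - ((1 / real I) * (\<Sum>i\<in>{1..I}. f i xstar) + (\<Sum>j\<in>{1..J}. g j xstar))
          + real J * ((\<Sum>j\<in>{1..J}. g j (orbcd_step gf g blk (eta k) z y)) - (\<Sum>j\<in>{1..J}. g j z))
          - real J * (eta k) / 2 * ((norm (xstar - z))\<^sup>2 - (norm (xstar - orbcd_step gf g blk (eta k) z y))\<^sup>2)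
          - Rf\<^sup>2 / (2 * (eta k)))"
        unfolding S_def by (rule sum.cong) (simp_all only: A_def e1 e2 Fo_def Fs_def gs_def)
      also have "\<dots> \<le> 0"
        by (rule step_avg[OF blk_disj blk_cover f_convex f_grad g_convex g_block I_pos eta0 gb])
      finally have "(\<Sum>y\<in>S. A k (h(k:=y))) \<le> 0" .
      then show "measure_pmf.expectation (pmf_of_set S) (\<lambda>y. A k (h(k:=y))) \<le> 0"
        using S_ne by (simp add: integral_pmf_of_set divide_nonpos_nonneg)
    qed
    finally show ?thesis .
  qed
  have claim2: "(\<Sum>k<T. Fo (Xi h k)) \<le> (\<Sum>k<T - 1. A k h) + (C + real T * Fs)" if h: "h \<in> set_pmf P" for h
  proof -
    define h' where "h' = ext h"
    define x where "x = Xi h'"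
    have eqF: "(\<Sum>k<T. Fo (Xi h k)) = (\<Sum>k<T. Fo (x k))"
      unfolding x_def h'_def by (rule sum.cong) (use Xi_ext[OF h] in auto)
    have eqA: "(\<Sum>k<T - 1. A k h) = (\<Sum>k<T - 1. A k h')"
      unfolding h'_def A_def by (rule sum.cong) (use Xi_ext[OF h] in auto)
    have good: "\<forall>t. h' t \<in> {1..I} \<times> {1..J}" unfolding h'_def by (rule good_ext'[OF h])
    have inX: "x t \<in> X" for t
      unfolding x_def Xi_def L_def using iter_in_X good by blast
    have gbd: "norm (gf i (x t)) \<le> Rf" if "i \<in> {1..I}" for i t
      unfolding x_def Xi_def L_def by (rule grad_bound[rule_format, OF _ that]) (use good in auto)
    define Dl where "Dl = (\<lambda>k. (norm (xstar - x k))\<^sup>2)"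
    have D0: "0 \<le> D" using diameter_bounded_bound[OF X_bounded xstar_in_X xstar_in_X] X_diam by simp
    have ndist: "norm (xstar - x k) \<le> D" for k
      using diameter_bounded_bound[OF X_bounded xstar_in_X inX[of k]] X_diam by (simp add: dist_norm)
    have Dl: "0 \<le> Dl k \<and> Dl k \<le> D\<^sup>2" for k
      unfolding Dl_def using ndist[of k] by (auto intro: power_mono)
    have x0: "x 0 = 0" by (simp add: x_def Xi_def)
    obtain m where Tm: "T = Suc m" using T_pos by (cases T) auto
    have Tm1: "T - 1 = m" using Tm by simp
    define B where "B = (\<lambda>k. real J * eta k / 2 * (Dl k - Dl (Suc k)) + Rf\<^sup>2 / (2 * eta k))"
    have Ak: "A k h' = (Fo (x k) - Fs) + real J * (gs (x (Suc k)) - gs (x k)) - B k" for k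
      by (simp add: A_def B_def x_def Dl_def)
    have sumA: "(\<Sum>k<m. A k h') = (\<Sum>k<m. Fo (x k) - Fs) + real J * (gs (x m) - gs (x 0)) - (\<Sum>k<m. B k)"
    proof -
      have "(\<Sum>k<m. A k h') = (\<Sum>k<m. Fo (x k) - Fs) + (\<Sum>k<m. real J * (gs (x (Suc k)) - gs (x k))) - (\<Sum>k<m. B k)"
        unfolding Ak by (simp only: sum.distrib sum_subtractf)
      also have "(\<Sum>k<m. real J * (gs (x (Suc k)) - gs (x k))) = real J * (gs (x m) - gs (x 0))"
        by (simp only: sum_distrib_left[symmetric] sum_lessThan_telescope[of "\<lambda>k. gs (x k)"])
      finally show ?thesis .
    qed
    have sumB: "(\<Sum>k<m. B k) = real J / 2 * (\<Sum>k<m. eta k * (Dl k - Dl (Suc k))) + Rf\<^sup>2 * (\<Sum>k<m. 1 / (2 * eta k))"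
    proof -
      have "B = (\<lambda>k. real J / 2 * (eta k * (Dl k - Dl (Suc k))) + Rf\<^sup>2 * (1 / (2 * eta k)))"
        by (simp add: B_def fun_eq_iff)
      then show ?thesis by (simp only: sum.distrib sum_distrib_left[symmetric])
    qed
    have sumF: "(\<Sum>k<T. Fo (x k)) = (\<Sum>k<m. Fo (x k) - Fs) + real m * Fs + Fo (x m)"
    proof -
      have "(\<Sum>k<m. Fo (x k) - Fs) = (\<Sum>k<m. Fo (x k)) - real m * Fs" by (simp add: sum_subtractf)
      then show ?thesis unfolding Tm sum.lessThan_Suc by linarith
    qed
    define d where "d = norm (xstar - x m)"
    have d0: "0 \<le> d" and dD: "d \<le> D" using ndist[of m] by (auto simp: d_def)
    have Dlm: "Dl m = d\<^sup>2" by (simp add: Dl_def d_def)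
    have fpart: "(1 / real I) * (\<Sum>i\<in>{1..I}. f i (x m)) - (1 / real I) * (\<Sum>i\<in>{1..I}. f i xstar) \<le> Rf * d"
    proof -
      have "(\<Sum>i\<in>{1..I}. f i (x m) - f i xstar) \<le> (\<Sum>i\<in>{1..I}. Rf * d)"
      proof (rule sum_mono)
        fix i assume i: "i \<in> {1..I}"
        have "f i (x m) + gf i (x m) \<bullet> (xstar - x m) \<le> f i xstar"
          using f_convex f_grad i by (intro tangent) auto
        then have "f i (x m) - f i xstar \<le> gf i (x m) \<bullet> (x m - xstar)" by (simp add: inner_diff_right)
        also have "\<dots> \<le> norm (gf i (x m)) * norm (x m - xstar)" by (rule norm_cauchy_schwarz)
        also have "\<dots> \<le> Rf * d" unfolding d_def norm_minus_commute[of "x m"]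
          using gbd[OF i] by (intro mult_right_mono) auto
        finally show "f i (x m) - f i xstar \<le> Rf * d" .
      qed
      then have "(\<Sum>i\<in>{1..I}. f i (x m)) - (\<Sum>i\<in>{1..I}. f i xstar) \<le> real I * (Rf * d)"
        by (simp add: sum_subtractf)
      then have "(1 / real I) * ((\<Sum>i\<in>{1..I}. f i (x m)) - (\<Sum>i\<in>{1..I}. f i xstar)) \<le> (1 / real I) * (real I * (Rf * d))"
        by (intro mult_left_mono) auto
      then show ?thesis using I_pos by (simp add: right_diff_distrib)
    qed
    have Fmin: "Fs \<le> Fo (x m)" unfolding Fs_def Fo_def using xstar_min by blast
    have bracket: "Fo (x m) - Fs - real J * (gs (x m) - gs xstar) \<le> real J * (Rf * d)"
    proof -
      define a where "a = (1 / real I) * (\<Sum>i\<in>{1..I}. f i (x m)) - (1 / real I) * (\<Sum>i\<in>{1..I}. f i xstar)"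
      define b where "b = gs (x m) - gs xstar"
      have ab: "Fo (x m) - Fs = a + b" by (simp add: a_def b_def Fo_def Fs_def gs_def)
      have a: "a \<le> Rf * d" using fpart by (simp add: a_def)
      have ab0: "0 \<le> a + b" using Fmin ab by simp
      have Rd: "0 \<le> Rf * d" using Rf0 d0 by simp
      have J1: "real J \<ge> 1" using J_pos by simp
      have gb: "gs (x m) - gs xstar = b" by (simp add: b_def)
      show ?thesis unfolding gb ab
      proof (cases "b \<ge> 0")
        case True
        have "b \<le> real J * b" using True J1 by (simp add: mult_le_cancel_right1)
        moreover have "Rf * d \<le> real J * (Rf * d)" using Rd J1 by (simp add: mult_le_cancel_right1)
        ultimately show "a + b - real J * b \<le> real J * (Rf * d)" using a by linarith
      next
        case False
        have "(real J - 1) * (- b) \<le> (real J - 1) * a" using ab0 J1 by (intro mult_left_mono) auto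
        then have "b - real J * b \<le> real J * a - a" by (simp add: algebra_simps)
        moreover have "real J * a \<le> real J * (Rf * d)" using a J1 by (intro mult_left_mono) auto
        ultimately show "a + b - real J * b \<le> real J * (Rf * d)" by linarith
      qed
    qed
    have main: "real J * (Rf * d) + (\<Sum>k<m. B k) \<le> real J * ((sqrt (real T) + L) / 2 * D\<^sup>2 + sqrt (real T) * Rf\<^sup>2)"
    proof (cases m)
      case 0
      have "Rf * d \<le> (Rf\<^sup>2 + d\<^sup>2) / 2" using sum_squares_bound[of Rf d] by simp
      also have "\<dots> \<le> (Rf\<^sup>2 + D\<^sup>2) / 2" using d0 dD by (simp add: power_mono)
      also have "\<dots> \<le> (sqrt (real T) + L) / 2 * D\<^sup>2 + sqrt (real T) * Rf\<^sup>2"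
      proof -
        have "(1 + L) / 2 * D\<^sup>2 \<ge> D\<^sup>2 / 2" using L0 by (simp add: field_simps)
        then show ?thesis using 0 Tm by (simp add: field_simps)
      qed
      finally have "real J * (Rf * d) \<le> real J * ((sqrt (real T) + L) / 2 * D\<^sup>2 + sqrt (real T) * Rf\<^sup>2)"
        by (intro mult_left_mono) auto
      then show ?thesis using 0 by simp
    next
      case (Suc m')
      define e where "e = eta m'"
      have e1: "e \<ge> 1" using eta1 by (simp add: e_def)
      have eT: "e \<le> sqrt (real T) + L" unfolding e_def eta_def Tm Suc by simp
      have tel: "(\<Sum>k<m. eta k * (Dl k - Dl (Suc k))) \<le> e * D\<^sup>2 - e * d\<^sup>2"
      proof -
        have mono: "eta k \<le> eta (Suc k)" for k by (simp add: eta_def)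
        have "eta 0 \<ge> 0" using eta0[of 0] by simp
        from tele_eta[of eta Dl "D\<^sup>2" m', OF mono this Dl]
        have "(\<Sum>k<Suc m'. eta k * (Dl k - Dl (Suc k))) \<le> eta m' * D\<^sup>2 - eta m' * Dl (Suc m')" .
        then show ?thesis unfolding e_def using Dlm Suc by simp
      qed
      have sq: "(\<Sum>k<m. 1 / (2 * eta k)) \<le> sqrt (real m) - 1/2"
      proof -
        have "(\<Sum>k<m. 1 / (2 * eta k)) \<le> (\<Sum>k<m. 1 / (2 * sqrt (real (Suc k))))"
        proof (rule sum_mono)
          fix k assume "k \<in> {..<m}"
          have p: "0 < 2 * sqrt (real (Suc k))" by simp
          have q: "2 * sqrt (real (Suc k)) \<le> 2 * eta k" using L0 unfolding eta_def by (simp add: algebra_simps)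
          show "1 / (2 * eta k) \<le> 1 / (2 * sqrt (real (Suc k)))"
          proof (rule divide_left_mono)
            show "0 < 2 * eta k * (2 * sqrt (real (Suc k)))" using p eta0[of k] by (intro mult_pos_pos) auto
          qed (use q in auto)
        qed
        also have "\<dots> \<le> sqrt (real m) - 1/2" unfolding Suc by (rule sqrt_sum)
        finally show ?thesis .
      qed
      have amgm: "Rf * d - e * d\<^sup>2 / 2 \<le> Rf\<^sup>2 / 2"
      proof -
        have "0 \<le> (Rf - e * d)\<^sup>2" by simp
        then have "2 * e * (Rf * d) \<le> Rf\<^sup>2 + e\<^sup>2 * d\<^sup>2" by (simp add: power2_eq_square algebra_simps)
        then have "Rf * d - e * d\<^sup>2 / 2 \<le> Rf\<^sup>2 / (2 * e)" using e1 by (simp add: field_simps power2_eq_square)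
        also have "\<dots> \<le> Rf\<^sup>2 / 2" using e1 by (intro divide_left_mono) auto
        finally show ?thesis .
      qed
      have "real J * (Rf * d) + (\<Sum>k<m. B k)
          \<le> real J * (Rf * d) + real J / 2 * (e * D\<^sup>2 - e * d\<^sup>2) + Rf\<^sup>2 * (sqrt (real m) - 1/2)"
      proof -
        have t1: "real J / 2 * (\<Sum>k<m. eta k * (Dl k - Dl (Suc k))) \<le> real J / 2 * (e * D\<^sup>2 - e * d\<^sup>2)"
          using tel by (intro mult_left_mono) auto
        have t2: "Rf\<^sup>2 * (\<Sum>k<m. 1 / (2 * eta k)) \<le> Rf\<^sup>2 * (sqrt (real m) - 1/2)"
          using sq by (intro mult_left_mono) auto
        show ?thesis unfolding sumB using t1 t2 by linarith
      qed
      also have "\<dots> = real J * (Rf * d - e * d\<^sup>2 / 2) + real J * (e / 2 * D\<^sup>2) + Rf\<^sup>2 * (sqrt (real m) - 1/2)"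
        by (simp add: algebra_simps)
      also have "\<dots> \<le> real J * (Rf\<^sup>2 / 2) + real J * ((sqrt (real T) + L) / 2 * D\<^sup>2) + Rf\<^sup>2 * (sqrt (real T) - 1/2)"
      proof -
        have "real J * (Rf * d - e * d\<^sup>2 / 2) \<le> real J * (Rf\<^sup>2 / 2)" using amgm by (intro mult_left_mono) auto
        moreover have "e / 2 * D\<^sup>2 \<le> (sqrt (real T) + L) / 2 * D\<^sup>2" using eT by (intro mult_right_mono) auto
        then have "real J * (e / 2 * D\<^sup>2) \<le> real J * ((sqrt (real T) + L) / 2 * D\<^sup>2)" by (intro mult_left_mono) auto
        moreover have "sqrt (real m) \<le> sqrt (real T)" using Tm by simp
        then have "Rf\<^sup>2 * (sqrt (real m) - 1/2) \<le> Rf\<^sup>2 * (sqrt (real T) - 1/2)" by (intro mult_left_mono) auto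
        ultimately show ?thesis by linarith
      qed
      also have "\<dots> \<le> real J * ((sqrt (real T) + L) / 2 * D\<^sup>2 + sqrt (real T) * Rf\<^sup>2)"
      proof -
        have sT: "sqrt (real T) \<ge> 1" using T_pos by simp
        have J1: "real J \<ge> 1" using J_pos by simp
        have "(real J - 1) * (sqrt (real T) - 1/2) \<ge> 0" using sT J1 by (intro mult_nonneg_nonneg) linarith+
        then have "real J / 2 + (sqrt (real T) - 1/2) \<le> real J * sqrt (real T)" by (simp add: algebra_simps add_divide_distrib diff_divide_distrib)
        then have "Rf\<^sup>2 * (real J / 2 + (sqrt (real T) - 1/2)) \<le> Rf\<^sup>2 * (real J * sqrt (real T))"
          by (intro mult_left_mono) auto
        then show ?thesis by (simp add: algebra_simps)
      qed
      finally show ?thesis .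
    qed
    have "(\<Sum>k<T. Fo (x k)) - ((\<Sum>k<m. A k h') + (C + real T * Fs))
        = (Fo (x m) - Fs - real J * (gs (x m) - gs xstar)) + (\<Sum>k<m. B k) - real J * ((sqrt (real T) + L) / 2 * D\<^sup>2 + sqrt (real T) * Rf\<^sup>2)"
      unfolding sumF sumA C_def x0 by (simp add: Tm algebra_simps)
    also have "\<dots> \<le> 0" using bracket main by linarith
    finally have "(\<Sum>k<T. Fo (x k)) \<le> (\<Sum>k<m. A k h') + (C + real T * Fs)" by simp
    then show ?thesis unfolding eqF eqA by (simp only: Tm1)
  qed
  have jensen: "Fo ((1/real T) *\<^sub>R (\<Sum>k<T. Xi h k)) \<le> (1/real T) * (\<Sum>k<T. Fo (Xi h k))" for h
  proof -
    have xb: "(1/real T) *\<^sub>R (\<Sum>k<T. Xi h k) = (\<Sum>k<T. (1/real T) *\<^sub>R Xi h k)" by (simp add: scaleR_sum_right)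
    have w: "(\<Sum>k<T. 1/real T) = 1" using T_pos by simp
    have "0 \<in> {..<T}" using T_pos by simp
    then have ne: "{..<T} \<noteq> {}" by blast
    have fi: "f i (\<Sum>k<T. (1/real T) *\<^sub>R Xi h k) \<le> (\<Sum>k<T. (1/real T) * f i (Xi h k))" if "i \<in> {1..I}" for i
      using convex_on_sum[where S="{..<T}" and C=UNIV and f="f i" and a="\<lambda>_. 1/real T" and y="Xi h"] f_convex that w ne
      by auto
    have gj: "g j (\<Sum>k<T. (1/real T) *\<^sub>R Xi h k) \<le> (\<Sum>k<T. (1/real T) * g j (Xi h k))" if "j \<in> {1..J}" for j
      using convex_on_sum[where S="{..<T}" and C=UNIV and f="g j" and a="\<lambda>_. 1/real T" and y="Xi h"] g_convex that w ne
      by auto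
    have s1: "(\<Sum>i\<in>{1..I}. \<Sum>k<T. (1/real T) * f i (Xi h k)) = (\<Sum>k<T. (1/real T) * (\<Sum>i\<in>{1..I}. f i (Xi h k)))"
      by (subst sum.swap) (simp add: sum_distrib_left)
    have s2: "(\<Sum>j\<in>{1..J}. \<Sum>k<T. (1/real T) * g j (Xi h k)) = (\<Sum>k<T. (1/real T) * (\<Sum>j\<in>{1..J}. g j (Xi h k)))"
      by (subst sum.swap) (simp add: sum_distrib_left)
    have "Fo ((1/real T) *\<^sub>R (\<Sum>k<T. Xi h k))
        \<le> (1 / real I) * (\<Sum>i\<in>{1..I}. \<Sum>k<T. (1/real T) * f i (Xi h k)) + (\<Sum>j\<in>{1..J}. \<Sum>k<T. (1/real T) * g j (Xi h k))"
      unfolding Fo_def xb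
      by (intro add_mono mult_left_mono sum_mono fi gj) auto
    also have "\<dots> = (1/real T) * (\<Sum>k<T. Fo (Xi h k))"
      unfolding s1 s2 Fo_def by (simp add: sum_distrib_left sum.distrib algebra_simps)
    finally show ?thesis .
  qed
  have key: "measure_pmf.expectation P (\<lambda>h. Fo ((1/real T) *\<^sub>R (\<Sum>k<T. Xi h k))) - Fo x0 \<le> C / real T" for x0
  proof -
    have "measure_pmf.expectation P (\<lambda>h. Fo ((1/real T) *\<^sub>R (\<Sum>k<T. Xi h k)))
        \<le> measure_pmf.expectation P (\<lambda>h. (1/real T) * (\<Sum>k<T. Fo (Xi h k)))"
      by (rule exp_mono_supp[OF finP jensen])
    also have "\<dots> = (1/real T) * measure_pmf.expectation P (\<lambda>h. \<Sum>k<T. Fo (Xi h k))"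
      by (rule exp_scale[OF finP])
    also have "\<dots> \<le> (1/real T) * measure_pmf.expectation P (\<lambda>h. (\<Sum>k<T - 1. A k h) + (C + real T * Fs))"
      by (intro mult_left_mono exp_mono_supp[OF finP] claim2) auto
    also have "measure_pmf.expectation P (\<lambda>h. (\<Sum>k<T - 1. A k h) + (C + real T * Fs))
        = (\<Sum>k<T - 1. measure_pmf.expectation P (A k)) + (C + real T * Fs)"
      by (rule exp_lin[OF finP]) simp
    also have "(1/real T) * ((\<Sum>k<T - 1. measure_pmf.expectation P (A k)) + (C + real T * Fs))
        \<le> (1/real T) * (0 + (C + real T * Fs))"
      using claim1 by (intro mult_left_mono add_right_mono sum_nonpos) auto
    also have "\<dots> = C / real T + Fs" using T_pos by (simp add: field_simps)
    finally have "measure_pmf.expectation P (\<lambda>h. Fo ((1/real T) *\<^sub>R (\<Sum>k<T. Xi h k))) \<le> C / real T + Fs" .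
    moreover have "Fs \<le> Fo x0" unfolding Fs_def Fo_def using xstar_min by blast
    ultimately show ?thesis by simp
  qed
  show ?thesis
  proof
    fix x0 :: "real^'n"
    show "measure_pmf.expectation
              (Pi_pmf {..<T - 1} undefined (\<lambda>_. pmf_of_set ({1..I} \<times> {1..J})))
              (\<lambda>h. let xbar = (1 / real T) *\<^sub>R (\<Sum>k<T. orbcd_iter gf g blk (Max (Lj ` {1..J})) h k)
                   in (1 / real I) * (\<Sum>i\<in>{1..I}. f i xbar) + (\<Sum>j\<in>{1..J}. g j xbar))
            - ((1 / real I) * (\<Sum>i\<in>{1..I}. f i x0) + (\<Sum>j\<in>{1..J}. g j x0))
          \<le> real J * ((sqrt (real T) + Max (Lj ` {1..J})) / 2 * D\<^sup>2 + sqrt (real T) * Rf\<^sup>2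
                + (\<Sum>j\<in>{1..J}. g j 0) - (\<Sum>j\<in>{1..J}. g j xstar)) / real T"
      using key[of x0] unfolding P_def S_def Fo_def Xi_def L_def C_def gs_def Let_def .
  qed

qed


end
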